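(* Let $c \in (0,1/2]$, $t_1 \in [0,1-2c]$, $t_2 \in [t_1+c,1-c]$, and $p,q\in(0,1)$ with $p\neq q$. Then \[ W_1(\mu_p,\mu_q) = \frac{t_2-t_1}{1-c}\,|p-q|. \]
   Context: Let $S_1(x)=cx+t_1$ and $S_2(x)=cx+t_2$ on $[0,1]$, and let $F\subseteq[0,1]$ be the unique nonempty compact set with $F=S_1(F)\cup S_2(F)$. For $p\in(0,1)$, $\mu_p$ is the unique Borel probability measure on $[0,1]$ with $\mu_p = p\,\mu_p\circ S_1^{-1} + (1-p)\,\mu_p\circ S_2^{-1}$. For Borel probability measures $\mu,\nu$ on $[0,1]$ and $\rho\ge1$, $W_\rho(\mu,\nu)=\inf_{\gamma}\left(\int |x-y|^\rho\,d\gamma(x,y)\right)^{1/\rho}$, the infimum over all Borel probability measures $\gamma$ on $[0,1]^2$ with first marginal $\mu$ and second marginal $\nu$. *)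

theory Defs
  imports "HOL-Probability.Probability"
begin

text \<open>Borel probability measures on [0,1] are represented as probability measures on
  the Borel sets of the real line that give full mass to [0,1].\<close>

definition prob_on_unit :: "real measure \<Rightarrow> bool" where
  "prob_on_unit M \<longleftrightarrow> prob_space M \<and> sets M = sets borel \<and> emeasure M {0..1} = 1"

definition is_ss_measure :: "real \<Rightarrow> real \<Rightarrow> real \<Rightarrow> real \<Rightarrow> real measure \<Rightarrow> bool" where
  "is_ss_measure c t1 t2 p M \<longleftrightarrow> prob_on_unit M \<and>
     (\<forall>A \<in> sets borel. emeasure M A =
        ennreal p * emeasure M ((\<lambda>x. c * x + t1) -` A)
        + ennreal (1 - p) * emeasure M ((\<lambda>x. c * x + t2) -` A))"

definition ss_measure :: "real \<Rightarrow> real \<Rightarrow> real \<Rightarrow> real \<Rightarrow> real measure" where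
  "ss_measure c t1 t2 p = (THE M. is_ss_measure c t1 t2 p M)"

definition couplings :: "real measure \<Rightarrow> real measure \<Rightarrow> (real \<times> real) measure set" where
  "couplings \<mu> \<nu> = {\<gamma>. prob_space \<gamma> \<and> sets \<gamma> = sets borel \<and>
      distr \<gamma> borel fst = \<mu> \<and> distr \<gamma> borel snd = \<nu>}"

definition wasserstein :: "real \<Rightarrow> real measure \<Rightarrow> real measure \<Rightarrow> real" where
  "wasserstein \<rho> \<mu> \<nu> =
     (INF \<gamma> \<in> couplings \<mu> \<nu>. (\<integral>z. \<bar>fst z - snd z\<bar> powr \<rho> \<partial>\<gamma>)) powr (1 / \<rho>)"

end

theory Submission
  imports Defs
begin


definition UB :: "real measure" where "UB = uniform_measure lborel {0..1}"

lemma UB_prob: "prob_space UB"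
  unfolding UB_def by (rule prob_space_uniform_measure) auto

lemma sets_UB[simp, measurable_cong]: "sets UB = sets borel"
  unfolding UB_def by simp

lemma space_UB[simp]: "space UB = UNIV"
  unfolding UB_def by simp

lemma UB_lt: assumes "0 < p" "p < 1" shows "emeasure UB {..<p} = ennreal p"
proof -
  have "{0..1} \<inter> {..<p} = {0..<p::real}" using assms by auto
  then show ?thesis unfolding UB_def using assms by (simp add: divide_ennreal_def)
qed

lemma UB_ge: assumes "0 < p" "p < 1" shows "emeasure UB {p..} = ennreal (1-p)"
proof -
  have "{0..1} \<inter> {p..} = {p..1::real}" using assms by auto
  then show ?thesis unfolding UB_def using assms by (simp add: divide_ennreal_def)
qed

lemma UB_nn: assumes "0 < p" "p < 1"
  shows "(\<integral>\<^sup>+u. (if u < p then a else b) \<partial>UB) = ennreal p * a + ennreal (1-p) * b"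
proof -
  have "(\<integral>\<^sup>+u. (if u < p then a else b) \<partial>UB) = (\<integral>\<^sup>+u. a * indicator {..<p} u + b * indicator {p..} u \<partial>UB)"
    by (intro nn_integral_cong) (auto simp: indicator_def)
  also have "\<dots> = (\<integral>\<^sup>+u. a * indicator {..<p} u \<partial>UB) + (\<integral>\<^sup>+u. b * indicator {p..} u \<partial>UB)"
    by (intro nn_integral_add) auto
  also have "\<dots> = ennreal p * a + ennreal (1-p) * b"
    using assms by (simp add: nn_integral_cmult_indicator UB_lt UB_ge mult.commute)
  finally show ?thesis .
qed

lemma UB_int: fixes a b :: "'b::{banach, second_countable_topology}"
  assumes "0 < p" "p < 1"
  shows "(\<integral>u. (if u < p then a else b) \<partial>UB) = p *\<^sub>R a + (1-p) *\<^sub>R b"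
proof -
  interpret prob_space UB by (rule UB_prob)
  have m1: "measure UB {..<p} = p" using UB_lt[OF assms] assms by (simp add: measure_def)
  have m2: "measure UB {p..} = 1 - p" using UB_ge[OF assms] assms by (simp add: measure_def)
  have "(\<integral>u. (if u < p then a else b) \<partial>UB) = (\<integral>u. indicator {..<p} u *\<^sub>R a + indicator {p..} u *\<^sub>R b \<partial>UB)"
    by (intro Bochner_Integration.integral_cong) (auto simp: indicator_def)
  also have "\<dots> = (\<integral>u. indicator {..<p} u *\<^sub>R a \<partial>UB) + (\<integral>u. indicator {p..} u *\<^sub>R b \<partial>UB)"
    by (intro Bochner_Integration.integral_add integrable_scaleR_left) (auto simp: emeasure_eq_measure)
  also have "\<dots> = p *\<^sub>R a + (1-p) *\<^sub>R b"
    by (simp add: m1 m2 integral_scaleR_left emeasure_eq_measure)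
  finally show ?thesis .
qed



definition gg :: "real \<Rightarrow> real \<Rightarrow> real \<Rightarrow> real \<Rightarrow> real" where
  "gg t1 t2 p u = (if u < p then t1 else t2)"

definition XX :: "real \<Rightarrow> real \<Rightarrow> real \<Rightarrow> real \<Rightarrow> real stream \<Rightarrow> real" where
  "XX c t1 t2 p \<omega> = (\<Sum>k. c^k * gg t1 t2 p (\<omega> !! k))"

lemma gg_meas[measurable]: "gg t1 t2 p \<in> borel_measurable borel"
  unfolding gg_def by measurable

lemma XX_meas[measurable]: "XX c t1 t2 p \<in> borel_measurable (stream_space UB)"
  unfolding XX_def by measurable

context
  fixes c t1 t2 :: real
  assumes c0: "0 < c" and c1: "c < 1" and t1: "0 \<le> t1" "t1 \<le> t2" and t2: "t2 \<le> 1 - c"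
begin

lemma gg_bnd: "0 \<le> gg t1 t2 p u" "gg t1 t2 p u \<le> 1 - c"
  using t1 t2 by (auto simp: gg_def)

lemma XX_summable: "summable (\<lambda>k. c^k * gg t1 t2 p (\<omega> !! k))"
proof (rule summable_comparison_test)
  show "\<exists>N. \<forall>n\<ge>N. norm (c^n * gg t1 t2 p (\<omega> !! n)) \<le> c^n * (1-c)"
    using gg_bnd c0 by (auto intro!: mult_left_mono)
  show "summable (\<lambda>n. c^n * (1-c))"
    using c0 c1 by (intro summable_mult2 summable_geometric) auto
qed

lemma XX_nonneg: "0 \<le> XX c t1 t2 p \<omega>"
  unfolding XX_def using XX_summable gg_bnd c0
  by (intro suminf_nonneg) auto

lemma XX_le1: "XX c t1 t2 p \<omega> \<le> 1"
proof -
  have s: "summable (\<lambda>n. c^n * (1-c))"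
    using c0 c1 by (intro summable_mult2 summable_geometric) auto
  have "XX c t1 t2 p \<omega> \<le> (\<Sum>n. c^n * (1-c))"
    unfolding XX_def using XX_summable s gg_bnd c0
    by (intro suminf_le) (auto intro!: mult_left_mono)
  also have "\<dots> = 1"
    using c0 c1 by (simp add: suminf_mult2[symmetric] suminf_geometric)
  finally show ?thesis .
qed

lemma XX_Stream: "XX c t1 t2 p (u ## \<omega>) = gg t1 t2 p u + c * XX c t1 t2 p \<omega>"
proof -
  have s: "summable (\<lambda>k. c^k * gg t1 t2 p ((u ## \<omega>) !! k))" by (rule XX_summable)
  have "(\<Sum>k. c^(Suc k) * gg t1 t2 p ((u ## \<omega>) !! Suc k)) = XX c t1 t2 p (u ## \<omega>) - gg t1 t2 p u"
    unfolding XX_def using suminf_split_head[OF s] by simp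
  moreover have "(\<Sum>k. c^(Suc k) * gg t1 t2 p ((u ## \<omega>) !! Suc k)) = c * XX c t1 t2 p \<omega>"
    unfolding XX_def using suminf_mult[OF XX_summable, of c p \<omega>]
    by (simp add: mult.assoc)
  ultimately show ?thesis by simp
qed

lemma XX_mono: assumes "q \<le> p" shows "XX c t1 t2 p \<omega> \<le> XX c t1 t2 q \<omega>"
  unfolding XX_def using XX_summable c0 t1 assms
  by (intro suminf_le) (auto intro!: mult_left_mono simp: gg_def)

definition Mu :: "real \<Rightarrow> real measure" where
  "Mu p = distr (stream_space UB) borel (XX c t1 t2 p)"

lemma Mu_ss: assumes p: "0 < p" "p < 1" shows "is_ss_measure c t1 t2 p (Mu p)"
proof -
  interpret U: prob_space UB by (rule UB_prob)
  interpret S: prob_space "stream_space UB" by (rule U.prob_space_stream_space)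
  let ?S = "stream_space UB"
  let ?X = "XX c t1 t2 p"
  have pu: "prob_on_unit (Mu p)"
    unfolding prob_on_unit_def Mu_def
  proof (intro conjI)
    show "prob_space (distr ?S borel ?X)" by (rule S.prob_space_distr) simp
    show "sets (distr ?S borel ?X) = sets borel" by simp
    have "emeasure (distr ?S borel ?X) {0..1} = emeasure ?S (?X -` {0..1} \<inter> space ?S)"
      by (rule emeasure_distr) auto
    also have "?X -` {0..1} \<inter> space ?S = space ?S" using XX_nonneg XX_le1 by auto
    finally show "emeasure (distr ?S borel ?X) {0..1} = 1" by (simp add: S.emeasure_space_1)
  qed
  have eq: "emeasure (Mu p) A =
        ennreal p * emeasure (Mu p) ((\<lambda>x. c * x + t1) -` A)
        + ennreal (1 - p) * emeasure (Mu p) ((\<lambda>x. c * x + t2) -` A)" if A: "A \<in> sets borel" for A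
  proof -
    have A'[measurable]: "A \<in> sets borel" by (rule A)
    have pre1: "(\<lambda>x. c * x + t1) -` A \<in> sets borel"
      by (rule measurable_sets_borel[OF _ A]) simp
    have pre2: "(\<lambda>x. c * x + t2) -` A \<in> sets borel"
      by (rule measurable_sets_borel[OF _ A]) simp
    have "emeasure (Mu p) A = emeasure ?S (?X -` A \<inter> space ?S)"
      unfolding Mu_def by (rule emeasure_distr) auto
    also have "\<dots> = (\<integral>\<^sup>+t. emeasure ?S {x\<in>space ?S. t ## x \<in> ?X -` A \<inter> space ?S} \<partial>UB)"
      by (rule U.emeasure_stream_space) measurable
    also have "\<dots> = (\<integral>\<^sup>+t. (if t < p then emeasure ?S ((\<lambda>\<omega>. c * ?X \<omega> + t1) -` A \<inter> space ?S)
                  else emeasure ?S ((\<lambda>\<omega>. c * ?X \<omega> + t2) -` A \<inter> space ?S)) \<partial>UB)"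
    proof (intro nn_integral_cong)
      fix t
      have "\<And>x. x \<in> space ?S \<Longrightarrow> t ## x \<in> space ?S"
        by (simp add: space_stream_space)
      then show "emeasure ?S {x\<in>space ?S. t ## x \<in> ?X -` A \<inter> space ?S} =
        (if t < p then emeasure ?S ((\<lambda>\<omega>. c * ?X \<omega> + t1) -` A \<inter> space ?S)
                  else emeasure ?S ((\<lambda>\<omega>. c * ?X \<omega> + t2) -` A \<inter> space ?S))"
        by (auto intro!: arg_cong[where f="emeasure ?S"] simp: XX_Stream gg_def algebra_simps)
    qed
    also have "\<dots> = ennreal p * emeasure ?S ((\<lambda>\<omega>. c * ?X \<omega> + t1) -` A \<inter> space ?S)
        + ennreal (1-p) * emeasure ?S ((\<lambda>\<omega>. c * ?X \<omega> + t2) -` A \<inter> space ?S)"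
      by (rule UB_nn[OF p])
    also have "emeasure ?S ((\<lambda>\<omega>. c * ?X \<omega> + t1) -` A \<inter> space ?S) = emeasure (Mu p) ((\<lambda>x. c * x + t1) -` A)"
      unfolding Mu_def by (subst emeasure_distr[OF _ pre1]) (auto intro!: arg_cong[where f="emeasure ?S"])
    also have "emeasure ?S ((\<lambda>\<omega>. c * ?X \<omega> + t2) -` A \<inter> space ?S) = emeasure (Mu p) ((\<lambda>x. c * x + t2) -` A)"
      unfolding Mu_def by (subst emeasure_distr[OF _ pre2]) (auto intro!: arg_cong[where f="emeasure ?S"])
    finally show ?thesis .
  qed
  show ?thesis unfolding is_ss_measure_def using pu eq by blast
qed

end


definition Phi :: "real \<Rightarrow> real \<Rightarrow> real \<Rightarrow> real \<Rightarrow> real \<times> real \<Rightarrow> real" where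
  "Phi c t1 t2 p z = (if fst z < p then c * snd z + t1 else c * snd z + t2)"

lemma Phi_meas[measurable]: "Phi c t1 t2 p \<in> borel_measurable (UB \<Otimes>\<^sub>M borel)"
  unfolding Phi_def by measurable

lemma ss_sets: "is_ss_measure c t1 t2 p M \<Longrightarrow> sets M = sets borel"
  unfolding is_ss_measure_def prob_on_unit_def by auto

lemma ss_prob: "is_ss_measure c t1 t2 p M \<Longrightarrow> prob_space M"
  unfolding is_ss_measure_def prob_on_unit_def by auto

lemma ss_distr:
  assumes ss: "is_ss_measure c t1 t2 p M" and p: "0 < p" "p < 1"
  shows "M = distr (UB \<Otimes>\<^sub>M M) borel (Phi c t1 t2 p)"
proof -
  have sM[measurable_cong]: "sets M = sets borel" by (rule ss_sets[OF ss])
  interpret M: prob_space M by (rule ss_prob[OF ss])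
  have spM: "space M = UNIV" using sets_eq_imp_space_eq[OF sM] by simp
  have meas: "Phi c t1 t2 p \<in> borel_measurable (UB \<Otimes>\<^sub>M M)"
    unfolding Phi_def by measurable
  show ?thesis
  proof (rule measure_eqI)
    show "sets M = sets (distr (UB \<Otimes>\<^sub>M M) borel (Phi c t1 t2 p))" by (simp add: sM)
    fix A assume "A \<in> sets M"
    then have A[measurable]: "A \<in> sets borel" by (simp add: sM)
    have pre1: "(\<lambda>x. c * x + t1) -` A \<in> sets borel"
      by (rule measurable_sets_borel[OF _ A]) simp
    have pre2: "(\<lambda>x. c * x + t2) -` A \<in> sets borel"
      by (rule measurable_sets_borel[OF _ A]) simp
    have "emeasure (distr (UB \<Otimes>\<^sub>M M) borel (Phi c t1 t2 p)) A
        = emeasure (UB \<Otimes>\<^sub>M M) (Phi c t1 t2 p -` A \<inter> space (UB \<Otimes>\<^sub>M M))"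
      by (rule emeasure_distr[OF meas A])
    also have "\<dots> = (\<integral>\<^sup>+u. emeasure M (Pair u -` (Phi c t1 t2 p -` A \<inter> space (UB \<Otimes>\<^sub>M M))) \<partial>UB)"
      by (rule M.emeasure_pair_measure_alt) (rule measurable_sets[OF meas A])
    also have "\<dots> = (\<integral>\<^sup>+u. (if u < p then emeasure M ((\<lambda>x. c * x + t1) -` A)
          else emeasure M ((\<lambda>x. c * x + t2) -` A)) \<partial>UB)"
      by (intro nn_integral_cong) (auto intro!: arg_cong[where f="emeasure M"]
            simp: Phi_def space_pair_measure spM)
    also have "\<dots> = emeasure M A"
      using ss A unfolding is_ss_measure_def by (simp add: UB_nn[OF p])
    finally show "emeasure M A = emeasure (distr (UB \<Otimes>\<^sub>M M) borel (Phi c t1 t2 p)) A" by simp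
  qed
qed

lemma ss_int:
  fixes f :: "real \<Rightarrow> 'b::{banach, second_countable_topology}"
  assumes ss: "is_ss_measure c t1 t2 p M" and p: "0 < p" "p < 1"
    and f[measurable]: "f \<in> borel_measurable borel" and fi: "integrable M f"
  shows "integral\<^sup>L M f = p *\<^sub>R (\<integral>x. f (c * x + t1) \<partial>M) + (1 - p) *\<^sub>R (\<integral>x. f (c * x + t2) \<partial>M)"
proof -
  have sM[measurable_cong]: "sets M = sets borel" by (rule ss_sets[OF ss])
  interpret M: prob_space M by (rule ss_prob[OF ss])
  interpret U: prob_space UB by (rule UB_prob)
  interpret P: pair_sigma_finite UB M ..
  have meas[measurable]: "Phi c t1 t2 p \<in> borel_measurable (UB \<Otimes>\<^sub>M M)"
    unfolding Phi_def by measurable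
  have eqM: "M = distr (UB \<Otimes>\<^sub>M M) borel (Phi c t1 t2 p)" by (rule ss_distr[OF ss p])
  have int2: "integrable (UB \<Otimes>\<^sub>M M) (\<lambda>z. f (Phi c t1 t2 p z))"
    using fi eqM integrable_distr_eq[OF meas f] by metis
  have "integral\<^sup>L M f = integral\<^sup>L (distr (UB \<Otimes>\<^sub>M M) borel (Phi c t1 t2 p)) f"
    using eqM by metis
  also have "\<dots> = (\<integral>z. f (Phi c t1 t2 p z) \<partial>(UB \<Otimes>\<^sub>M M))"
    by (rule integral_distr[OF meas f])
  also have "\<dots> = (\<integral>u. (\<integral>x. f (Phi c t1 t2 p (u, x)) \<partial>M) \<partial>UB)"
    by (rule P.integral_fst'[OF int2, symmetric])
  also have "\<dots> = (\<integral>u. (if u < p then (\<integral>x. f (c * x + t1) \<partial>M) else (\<integral>x. f (c * x + t2) \<partial>M)) \<partial>UB)"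
    by (intro Bochner_Integration.integral_cong) (auto simp: Phi_def)
  also have "\<dots> = p *\<^sub>R (\<integral>x. f (c * x + t1) \<partial>M) + (1 - p) *\<^sub>R (\<integral>x. f (c * x + t2) \<partial>M)"
    by (rule UB_int[OF p])
  finally show ?thesis .
qed

lemma ss_char:
  assumes ss: "is_ss_measure c t1 t2 p M" and p: "0 < p" "p < 1"
  shows "char M \<xi> = (p *\<^sub>R iexp (\<xi> * t1) + (1 - p) *\<^sub>R iexp (\<xi> * t2)) * char M (\<xi> * c)"
proof -
  have sM[measurable_cong]: "sets M = sets borel" by (rule ss_sets[OF ss])
  interpret M: prob_space M by (rule ss_prob[OF ss])
  have fi: "integrable M (\<lambda>x. iexp (\<xi> * x))"
    by (rule M.integrable_const_bound[where B=1]) auto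
  have e: "\<And>t x. iexp (\<xi> * (c * x + t)) = iexp (\<xi> * t) * iexp (\<xi> * c * x)"
    by (simp add: exp_add[symmetric] algebra_simps)
  have "char M \<xi> = p *\<^sub>R (\<integral>x. iexp (\<xi> * (c * x + t1)) \<partial>M) + (1 - p) *\<^sub>R (\<integral>x. iexp (\<xi> * (c * x + t2)) \<partial>M)"
    unfolding char_def by (rule ss_int[OF ss p _ fi]) simp
  also have "\<dots> = (p *\<^sub>R iexp (\<xi> * t1) + (1 - p) *\<^sub>R iexp (\<xi> * t2)) * char M (\<xi> * c)"
    unfolding e char_def by (simp add: algebra_simps)
  finally show ?thesis .
qed



lemma ss_realdist: "is_ss_measure c t1 t2 p M \<Longrightarrow> real_distribution M"
  unfolding real_distribution_def real_distribution_axioms_def using ss_prob ss_sets by blast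

lemma ss_unique:
  assumes c: "0 < c" "c < 1" and p: "0 < p" "p < 1"
    and s1: "is_ss_measure c t1 t2 p M1" and s2: "is_ss_measure c t1 t2 p M2"
  shows "M1 = M2"
proof -
  interpret A: real_distribution M1 by (rule ss_realdist[OF s1])
  interpret B: real_distribution M2 by (rule ss_realdist[OF s2])
  define D where "D \<xi> = norm (char M1 \<xi> - char M2 \<xi>)" for \<xi>
  have step: "D \<xi> \<le> D (\<xi> * c)" for \<xi>
  proof -
    let ?h = "p *\<^sub>R iexp (\<xi> * t1) + (1 - p) *\<^sub>R iexp (\<xi> * t2)"
    have nh: "norm ?h \<le> 1"
    proof -
      have "norm ?h \<le> norm (p *\<^sub>R iexp (\<xi> * t1)) + norm ((1 - p) *\<^sub>R iexp (\<xi> * t2))"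
        by (rule norm_triangle_ineq)
      also have "\<dots> = 1" using p by (simp add: norm_scaleR)
      finally show ?thesis .
    qed
    have "char M1 \<xi> - char M2 \<xi> = ?h * (char M1 (\<xi> * c) - char M2 (\<xi> * c))"
      using ss_char[OF s1 p, of \<xi>] ss_char[OF s2 p, of \<xi>] by (metis right_diff_distrib)
    then have "D \<xi> = norm ?h * D (\<xi> * c)" unfolding D_def by (simp add: norm_mult)
    also have "\<dots> \<le> 1 * D (\<xi> * c)"
      using nh by (intro mult_right_mono) (auto simp: D_def)
    finally show ?thesis by simp
  qed
  have iter: "\<forall>\<xi>. D \<xi> \<le> D (\<xi> * c^n)" for n
  proof (induction n)
    case 0 then show ?case by simp
  next
    case (Suc n)
    show ?case
    proof
      fix \<xi>
      have "D \<xi> \<le> D (\<xi> * c)" by (rule step)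
      also have "\<dots> \<le> D (\<xi> * c * c^n)" using Suc by blast
      finally show "D \<xi> \<le> D (\<xi> * c ^ Suc n)" by (simp add: mult.assoc mult.commute)
    qed
  qed
  have cont: "isCont D 0" unfolding D_def
    by (intro continuous_intros A.isCont_char B.isCont_char)
  have "char M1 = char M2"
  proof
    fix \<xi>
    have lim0: "(\<lambda>n. \<xi> * c^n) \<longlonglongrightarrow> 0"
      using c by (intro tendsto_mult_right_zero LIMSEQ_power_zero) auto
    have "(\<lambda>n. D (\<xi> * c^n)) \<longlonglongrightarrow> D 0"
      by (rule isCont_tendsto_compose[OF cont lim0])
    then have "D \<xi> \<le> D 0"
      by (rule LIMSEQ_le_const) (use iter in blast)
    moreover have "D 0 = 0" unfolding D_def by (simp add: A.char_zero B.char_zero)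
    ultimately have "D \<xi> \<le> 0" by simp
    then show "char M1 \<xi> = char M2 \<xi>" unfolding D_def by simp
  qed
  then show ?thesis using Levy_uniqueness[OF ss_realdist[OF s1] ss_realdist[OF s2]] by blast
qed

lemma ss_mean:
  assumes c: "0 < c" "c < 1" and p: "0 < p" "p < 1"
    and ss: "is_ss_measure c t1 t2 p M"
  shows "integrable M (\<lambda>x. x)" "(\<integral>x. x \<partial>M) = (p * t1 + (1 - p) * t2) / (1 - c)"
proof -
  interpret real_distribution M by (rule ss_realdist[OF ss])
  have "prob {0..1} = 1" using ss unfolding is_ss_measure_def prob_on_unit_def
    by (simp add: emeasure_eq_measure)
  then have "AE x in M. x \<in> {0..1}" by (subst AE_in_set_eq_1) auto
  then have "AE x in M. norm x \<le> 1" by eventually_elim auto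
  then show fi: "integrable M (\<lambda>x. x)" by (rule integrable_const_bound) simp
  let ?m = "(\<integral>x. x \<partial>M)"
  have i: "(\<integral>x. c * x + t \<partial>M) = c * ?m + t" for t
    using fi prob_space by simp
  have "?m = p * (c * ?m + t1) + (1 - p) * (c * ?m + t2)"
    using ss_int[OF ss p _ fi] by (simp add: i)
  then have "?m * (1 - c) = p * t1 + (1 - p) * t2" by (simp add: algebra_simps)
  then show "?m = (p * t1 + (1 - p) * t2) / (1 - c)" using c by (simp add: field_simps)
qed



lemma fst_borel: "fst \<in> borel_measurable (borel :: (real \<times> real) measure)"
  using measurable_fst[of "borel::real measure" "borel::real measure"] by (simp add: borel_prod)

lemma snd_borel: "snd \<in> borel_measurable (borel :: (real \<times> real) measure)"
  using measurable_snd[of "borel::real measure" "borel::real measure"] by (simp add: borel_prod)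

lemma absdiff_borel: "(\<lambda>z::real \<times> real. \<bar>fst z - snd z\<bar>) \<in> borel_measurable borel"
  by (intro borel_measurable_abs borel_measurable_diff fst_borel snd_borel)

theorem corollary2p6:
  fixes c t1 t2 p q :: real
  assumes "0 < c" "c \<le> 1/2"
    and "0 \<le> t1" "t1 \<le> 1 - 2*c"
    and "t1 + c \<le> t2" "t2 \<le> 1 - c"
    and "0 < p" "p < 1" "0 < q" "q < 1" "p \<noteq> q"
  shows "wasserstein 1 (ss_measure c t1 t2 p) (ss_measure c t1 t2 q)
           = (t2 - t1) / (1 - c) * \<bar>p - q\<bar>"
proof -
  have c0: "0 < c" and c1: "c < 1" and t1: "0 \<le> t1" "t1 \<le> t2" and t2: "t2 \<le> 1 - c"
    using assms by auto
  note hyp = c0 c1 t1 t2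
  have ssM: "ss_measure c t1 t2 r = Mu c t1 t2 r" if r: "0 < r" "r < 1" for r
    unfolding ss_measure_def
  proof (rule the_equality)
    show "is_ss_measure c t1 t2 r (Mu c t1 t2 r)" by (rule Mu_ss[OF hyp r])
    show "M = Mu c t1 t2 r" if "is_ss_measure c t1 t2 r M" for M
      by (rule ss_unique[OF c0 c1 r that Mu_ss[OF hyp r]])
  qed
  define m where "m r = (r * t1 + (1 - r) * t2) / (1 - c)" for r
  have mean: "integrable (Mu c t1 t2 r) (\<lambda>x. x)" "(\<integral>x. x \<partial>Mu c t1 t2 r) = m r"
    if r: "0 < r" "r < 1" for r
    using ss_mean[OF c0 c1 r Mu_ss[OF hyp r]] unfolding m_def by auto
  have num: "(p*t1 + (1-p)*t2) - (q*t1+(1-q)*t2) = (t2-t1)*(q-p)" by (simp add: algebra_simps)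
  have dm: "m p - m q = (t2 - t1) / (1 - c) * (q - p)"
    unfolding m_def diff_divide_distrib[symmetric] num by simp
  have dm0: "0 \<le> (t2 - t1) / (1 - c)" using t1 c1 by simp
  let ?S = "stream_space UB"
  interpret U: prob_space UB by (rule UB_prob)
  interpret S: prob_space ?S by (rule U.prob_space_stream_space)
  have intX: "integrable ?S (XX c t1 t2 r)" "(\<integral>\<omega>. XX c t1 t2 r \<omega> \<partial>?S) = m r"
    if r: "0 < r" "r < 1" for r
  proof -
    have "integrable (Mu c t1 t2 r) (\<lambda>x. x)" by (rule mean[OF r])
    then have "integrable (distr ?S borel (XX c t1 t2 r)) (\<lambda>x. x)" by (simp only: Mu_def[OF hyp])
    then show "integrable ?S (XX c t1 t2 r)" using integrable_distr[OF XX_meas] by blast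
    have "(\<integral>\<omega>. XX c t1 t2 r \<omega> \<partial>?S) = (\<integral>x. x \<partial>Mu c t1 t2 r)"
      unfolding Mu_def[OF hyp] using integral_distr[OF XX_meas, of "\<lambda>x::real. x"] by simp
    then show "(\<integral>\<omega>. XX c t1 t2 r \<omega> \<partial>?S) = m r" using mean[OF r] by simp
  qed
  let ?mu = "ss_measure c t1 t2 p" and ?nu = "ss_measure c t1 t2 q"
  let ?F = "\<lambda>\<gamma>. (\<integral>z. \<bar>fst z - snd z\<bar> powr 1 \<partial>\<gamma>)"
  define \<gamma>0 where "\<gamma>0 = distr ?S borel (\<lambda>\<omega>. (XX c t1 t2 p \<omega>, XX c t1 t2 q \<omega>))"
  have g0meas: "(\<lambda>\<omega>. (XX c t1 t2 p \<omega>, XX c t1 t2 q \<omega>)) \<in> borel_measurable ?S"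
    by (intro borel_measurable_Pair XX_meas)
  have g0: "\<gamma>0 \<in> couplings ?mu ?nu"
    unfolding couplings_def \<gamma>0_def
  proof (intro CollectI conjI)
    show "prob_space (distr ?S borel (\<lambda>\<omega>. (XX c t1 t2 p \<omega>, XX c t1 t2 q \<omega>)))"
      by (rule S.prob_space_distr[OF g0meas])
    show "sets (distr ?S borel (\<lambda>\<omega>. (XX c t1 t2 p \<omega>, XX c t1 t2 q \<omega>))) = sets borel" by simp
    have "distr (distr ?S borel (\<lambda>\<omega>. (XX c t1 t2 p \<omega>, XX c t1 t2 q \<omega>))) borel fst
       = distr ?S borel (fst \<circ> (\<lambda>\<omega>. (XX c t1 t2 p \<omega>, XX c t1 t2 q \<omega>)))"
      by (rule distr_distr[OF fst_borel g0meas])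
    then show "distr (distr ?S borel (\<lambda>\<omega>. (XX c t1 t2 p \<omega>, XX c t1 t2 q \<omega>))) borel fst = ?mu"
      using assms by (simp add: ssM Mu_def[OF hyp] comp_def)
    have "distr (distr ?S borel (\<lambda>\<omega>. (XX c t1 t2 p \<omega>, XX c t1 t2 q \<omega>))) borel snd
       = distr ?S borel (snd \<circ> (\<lambda>\<omega>. (XX c t1 t2 p \<omega>, XX c t1 t2 q \<omega>)))"
      by (rule distr_distr[OF snd_borel g0meas])
    then show "distr (distr ?S borel (\<lambda>\<omega>. (XX c t1 t2 p \<omega>, XX c t1 t2 q \<omega>))) borel snd = ?nu"
      using assms by (simp add: ssM Mu_def[OF hyp] comp_def)
  qed
  have Fg0: "?F \<gamma>0 = \<bar>m p - m q\<bar>"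
  proof -
    have "?F \<gamma>0 = (\<integral>\<omega>. \<bar>XX c t1 t2 p \<omega> - XX c t1 t2 q \<omega>\<bar> \<partial>?S)"
      unfolding \<gamma>0_def powr_one' abs_abs by (subst integral_distr[OF g0meas absdiff_borel]) simp
    also have "\<dots> = \<bar>m p - m q\<bar>"
    proof (cases "q \<le> p")
      case True
      have "(\<integral>\<omega>. \<bar>XX c t1 t2 p \<omega> - XX c t1 t2 q \<omega>\<bar> \<partial>?S) = (\<integral>\<omega>. XX c t1 t2 q \<omega> - XX c t1 t2 p \<omega> \<partial>?S)"
        using XX_mono[OF hyp True] by (intro Bochner_Integration.integral_cong) auto
      also have "\<dots> = m q - m p"
        using assms intX by (subst Bochner_Integration.integral_diff) auto
      also have "\<dots> = \<bar>m p - m q\<bar>"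
      proof -
        have "m p - m q \<le> 0" unfolding dm using True dm0 by (intro mult_nonneg_nonpos) auto
        then show ?thesis by simp
      qed
      finally show ?thesis .
    next
      case False
      then have F: "p \<le> q" by simp
      have "(\<integral>\<omega>. \<bar>XX c t1 t2 p \<omega> - XX c t1 t2 q \<omega>\<bar> \<partial>?S) = (\<integral>\<omega>. XX c t1 t2 p \<omega> - XX c t1 t2 q \<omega> \<partial>?S)"
        using XX_mono[OF hyp F] by (intro Bochner_Integration.integral_cong) auto
      also have "\<dots> = m p - m q"
        using assms intX by (subst Bochner_Integration.integral_diff) auto
      also have "\<dots> = \<bar>m p - m q\<bar>"
      proof -
        have "0 \<le> m p - m q" unfolding dm using F dm0 by (intro mult_nonneg_nonneg) auto
        then show ?thesis by simp
      qed
      finally show ?thesis .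
    qed
    finally show ?thesis .
  qed
  have lower: "\<bar>m p - m q\<bar> \<le> ?F \<gamma>" if g: "\<gamma> \<in> couplings ?mu ?nu" for \<gamma>
  proof -
    have sg0: "sets \<gamma> = sets (borel::(real \<times> real) measure)"
      using g unfolding couplings_def by simp
    have sg: "sets \<gamma> = sets (borel \<Otimes>\<^sub>M (borel::real measure))"
      unfolding borel_prod by (rule sg0)
    have pp: "0 < p" "p < 1" and qq: "0 < q" "q < 1" using assms by auto
    have d1: "distr \<gamma> borel fst = Mu c t1 t2 p" and d2: "distr \<gamma> borel snd = Mu c t1 t2 q"
      using g unfolding couplings_def ssM[OF pp] ssM[OF qq] by auto
    have mf1: "fst \<in> borel_measurable \<gamma>"
      by (subst measurable_cong_sets[OF sg0 refl]) (rule fst_borel)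
    have mf2: "snd \<in> borel_measurable \<gamma>"
      by (subst measurable_cong_sets[OF sg0 refl]) (rule snd_borel)
    have "integrable (distr \<gamma> borel fst) (\<lambda>x::real. x)" unfolding d1 by (rule mean(1)[OF pp])
    then have i1: "integrable \<gamma> fst" using integrable_distr[OF mf1] by blast
    have "integrable (distr \<gamma> borel snd) (\<lambda>x::real. x)" unfolding d2 by (rule mean(1)[OF qq])
    then have i2: "integrable \<gamma> snd" using integrable_distr[OF mf2] by blast
    have e1: "(\<integral>z. fst z \<partial>\<gamma>) = m p"
      using integral_distr[OF mf1, of "\<lambda>x::real. x"] mean(2)[OF pp] unfolding d1 by simp
    have e2: "(\<integral>z. snd z \<partial>\<gamma>) = m q"
      using integral_distr[OF mf2, of "\<lambda>x::real. x"] mean(2)[OF qq] unfolding d2 by simp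
    have "\<bar>m p - m q\<bar> = \<bar>\<integral>z. fst z - snd z \<partial>\<gamma>\<bar>"
      using Bochner_Integration.integral_diff[OF i1 i2] e1 e2 by simp
    also have "\<dots> \<le> (\<integral>z. norm (fst z - snd z) \<partial>\<gamma>)"
      using integral_norm_bound[of \<gamma> "\<lambda>z. fst z - snd z"] by simp
    also have "\<dots> = ?F \<gamma>" by simp
    finally show ?thesis .
  qed
  have nonneg: "0 \<le> ?F \<gamma>" for \<gamma> :: "(real \<times> real) measure"
    by (rule Bochner_Integration.integral_nonneg) auto
  have inf: "(INF \<gamma> \<in> couplings ?mu ?nu. ?F \<gamma>) = \<bar>m p - m q\<bar>"
  proof (rule antisym)
    show "(INF \<gamma> \<in> couplings ?mu ?nu. ?F \<gamma>) \<le> \<bar>m p - m q\<bar>"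
    proof -
      have bdd: "bdd_below (?F ` couplings ?mu ?nu)" by (rule bdd_belowI2[where m=0]) (rule nonneg)
      show ?thesis using cINF_lower[OF bdd g0] Fg0 by simp
    qed
    show "\<bar>m p - m q\<bar> \<le> (INF \<gamma> \<in> couplings ?mu ?nu. ?F \<gamma>)"
      using g0 lower by (intro cINF_greatest) auto
  qed
  have "wasserstein 1 ?mu ?nu = \<bar>\<bar>m p - m q\<bar>\<bar>"
    unfolding wasserstein_def using inf by simp
  also have "\<dots> = (t2 - t1) / (1 - c) * \<bar>p - q\<bar>"
    using dm t1 c1 by (simp add: abs_mult abs_minus_commute)
  finally show ?thesis .
qed

end
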